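(* Let $n\ge 1$. Let $H_1$ be the graph obtained from the complete bipartite graph $K_{n,n}$ with left vertices $l_1,\dots,l_n$ and right vertices $r_1,\dots,r_n$ by adding two new vertices $s$ (source) and $t$ (sink), joining each $l_j$ to $s$ by $n$ internally vertex-disjoint paths of length $n$ (with new internal vertices), and joining each $r_j$ to $t$ by $n$ internally vertex-disjoint paths of length $n$ (with new internal vertices). For $i\ge 2$, let $H_i$ be the graph obtained from $H_1$ by replacing every edge $(a,b)$ of $H_1$ by a fresh copy of $H_{i-1}$ whose source and sink are identified with $a$ and $b$; the source and sink of $H_i$ are $s$ and $t$. Then for every $i\ge 1$, $H_i$ has treewidth at most $n+1$.
   Context: Treewidth: a tree decomposition of $G=(V_G,E_G)$ is a tree $T$ with bags $X_i\subseteq V_G$ ($i\in V(T)$) such that the bags cover $V_G$, every edge has both endpoints in some bag, and for $i,j,k\in V(T)$ with $j$ on the $i$–$k$ path, $X_i\cap X_k\subseteq X_j$. Its width is $\max_i|X_i|-1$; the treewidth of $G$ is the minimum width over its tree decompositions. *)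

theory Defs
  imports Main
begin

text \<open>A graph is given by a vertex set V and a set E of edges, each edge being a
  2-element set of vertices.\<close>

definition is_tpath :: "'b set set \<Rightarrow> 'b list \<Rightarrow> bool" where
  "is_tpath TE xs \<longleftrightarrow> xs \<noteq> [] \<and> distinct xs \<and>
     (\<forall>m. Suc m < length xs \<longrightarrow> {xs ! m, xs ! Suc m} \<in> TE)"

definition is_tree :: "'b set \<Rightarrow> 'b set set \<Rightarrow> bool" where
  "is_tree N TE \<longleftrightarrow> finite N \<and> N \<noteq> {} \<and>
     TE \<subseteq> {{u, v} | u v. u \<in> N \<and> v \<in> N \<and> u \<noteq> v} \<and>
     (\<forall>u\<in>N. \<forall>v\<in>N. \<exists>xs. is_tpath TE xs \<and> hd xs = u \<and> last xs = v) \<and>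
     \<not> (\<exists>xs. is_tpath TE xs \<and> length xs \<ge> 3 \<and> {last xs, hd xs} \<in> TE)"

definition tree_decomposition ::
  "'a set \<Rightarrow> 'a set set \<Rightarrow> 'b set \<Rightarrow> 'b set set \<Rightarrow> ('b \<Rightarrow> 'a set) \<Rightarrow> bool" where
  "tree_decomposition V E N TE X \<longleftrightarrow> is_tree N TE \<and>
     (\<forall>i\<in>N. X i \<subseteq> V) \<and> (\<Union>i\<in>N. X i) = V \<and>
     (\<forall>e\<in>E. \<exists>i\<in>N. e \<subseteq> X i) \<and>
     (\<forall>xs. is_tpath TE xs \<longrightarrow> (\<forall>j\<in>set xs. X (hd xs) \<inter> X (last xs) \<subseteq> X j))"

definition treewidth :: "'a set \<Rightarrow> 'a set set \<Rightarrow> nat" where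
  "treewidth V E = (LEAST k. \<exists>(N :: nat set) TE X. tree_decomposition V E N TE X \<and>
      (\<forall>i\<in>N. card (X i) \<le> k + 1))"

text \<open>Vertices of the base graph H_1: source S, sink T, left vertices L j, right
  vertices R j (j < n), internal vertex PL j k m = m-th internal vertex of the k-th
  path from s to l_j, and PR j k m = m-th internal vertex of the k-th path from r_j
  to t (0 < m < n).\<close>

datatype v1 = S | T | L nat | R nat | PL nat nat nat | PR nat nat nat

definition nodeL :: "nat \<Rightarrow> nat \<Rightarrow> nat \<Rightarrow> nat \<Rightarrow> v1" where
  "nodeL n j k m = (if m = 0 then S else if m = n then L j else PL j k m)"

definition nodeR :: "nat \<Rightarrow> nat \<Rightarrow> nat \<Rightarrow> nat \<Rightarrow> v1" where
  "nodeR n j k m = (if m = 0 then R j else if m = n then T else PR j k m)"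

definition V1 :: "nat \<Rightarrow> v1 set" where
  "V1 n = {S, T} \<union> L ` {..<n} \<union> R ` {..<n} \<union>
     {PL j k m | j k m. j < n \<and> k < n \<and> 0 < m \<and> m < n} \<union>
     {PR j k m | j k m. j < n \<and> k < n \<and> 0 < m \<and> m < n}"

text \<open>Edges of H_1, each oriented (from the source side towards the sink side);
  the orientation tells how the source/sink of the substituted copies are glued.\<close>

definition D1 :: "nat \<Rightarrow> (v1 \<times> v1) set" where
  "D1 n = {(L j, R k) | j k. j < n \<and> k < n} \<union>
     {(nodeL n j k m, nodeL n j k (Suc m)) | j k m. j < n \<and> k < n \<and> m < n} \<union>
     {(nodeR n j k m, nodeR n j k (Suc m)) | j k m. j < n \<and> k < n \<and> m < n}"

text \<open>Vertices of H_i: a list of H_1-edges (the nested copies one lies in) and a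
  vertex of H_1.  emb a b embeds a copy into the edge (a,b), identifying the copy's
  source with a and its sink with b.\<close>

type_synonym hvert = "(v1 \<times> v1) list \<times> v1"

definition emb :: "v1 \<Rightarrow> v1 \<Rightarrow> hvert \<Rightarrow> hvert" where
  "emb a b x = (if x = ([], S) then ([], a) else if x = ([], T) then ([], b)
                else ((a, b) # fst x, snd x))"

text \<open>H n 0 is a single edge s--t (so that H n 1 is exactly H_1); H n (i+1) is H_1 with
  every edge (a,b) replaced by a fresh copy of H n i glued at a and b.\<close>

fun Hv :: "nat \<Rightarrow> nat \<Rightarrow> hvert set" where
  "Hv n 0 = {([], S), ([], T)}"
| "Hv n (Suc i) = (\<lambda>v. ([], v)) ` V1 n \<union> (\<Union>(a, b)\<in>D1 n. emb a b ` Hv n i)"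

fun He :: "nat \<Rightarrow> nat \<Rightarrow> hvert set set" where
  "He n 0 = {{([], S), ([], T)}}"
| "He n (Suc i) = (\<Union>(a, b)\<in>D1 n. (\<lambda>e. emb a b ` e) ` He n i)"

end

theory Submission
  imports Defs
begin


lemma tpath_Nil[simp]: "\<not> is_tpath A []"
  by (simp add: is_tpath_def)

lemma tpath_single[simp]: "is_tpath A [x]"
  by (simp add: is_tpath_def)

lemma tpath_Cons2: "is_tpath A (x#y#r) \<longleftrightarrow> {x,y}\<in>A \<and> x \<notin> set (y#r) \<and> is_tpath A (y#r)"
proof
  assume h: "is_tpath A (x#y#r)"
  have "{x,y}\<in>A" using h unfolding is_tpath_def by (metis Suc_less_eq length_Cons nth_Cons_0 nth_Cons_Suc zero_less_Suc)
  moreover have "\<forall>m. Suc m < length (y#r) \<longrightarrow> {(y#r) ! m, (y#r) ! Suc m} \<in> A"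
  proof (intro allI impI)
    fix m assume "Suc m < length (y#r)"
    then have "Suc (Suc m) < length (x#y#r)" by simp
    then show "{(y#r) ! m, (y#r) ! Suc m} \<in> A" using h unfolding is_tpath_def by (metis nth_Cons_Suc)
  qed
  ultimately show "{x,y}\<in>A \<and> x \<notin> set (y#r) \<and> is_tpath A (y#r)" using h unfolding is_tpath_def by auto
next
  assume h: "{x,y}\<in>A \<and> x \<notin> set (y#r) \<and> is_tpath A (y#r)"
  have "\<forall>m. Suc m < length (x#y#r) \<longrightarrow> {(x#y#r) ! m, (x#y#r) ! Suc m} \<in> A"
  proof (intro allI impI)
    fix m assume m: "Suc m < length (x#y#r)"
    show "{(x#y#r) ! m, (x#y#r) ! Suc m} \<in> A"
    proof (cases m)
      case 0 then show ?thesis using h by simp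
    next
      case (Suc k) then show ?thesis using h m unfolding is_tpath_def by auto
    qed
  qed
  then show "is_tpath A (x#y#r)" using h unfolding is_tpath_def by auto
qed

lemma tpath_append:
  assumes "ys \<noteq> []" "zs \<noteq> []"
  shows "is_tpath A (ys@zs) \<longleftrightarrow> is_tpath A ys \<and> is_tpath A zs \<and> {last ys, hd zs} \<in> A \<and> set ys \<inter> set zs = {}"
  using assms
proof (induction ys)
  case Nil then show ?case by simp
next
  case (Cons x ys)
  obtain z r where zs: "zs = z#r" using Cons.prems by (cases zs) auto
  show ?case
  proof (cases ys)
    case Nil then show ?thesis using zs by (simp add: tpath_Cons2; blast)
  next
    case (Cons y r')
    then show ?thesis using Cons.IH zs by (auto simp add: tpath_Cons2)
  qed
qed

lemma tpath_mono: "is_tpath A xs \<Longrightarrow> A \<subseteq> B \<Longrightarrow> is_tpath B xs"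
  unfolding is_tpath_def by blast

lemma tpath_map:
  assumes "is_tpath A xs" "inj_on f (set xs)" "\<And>u v. {u,v}\<in>A \<Longrightarrow> {f u, f v} \<in> B"
  shows "is_tpath B (map f xs)"
  using assms unfolding is_tpath_def by (auto simp: distinct_map)

lemma tpath_set:
  assumes "TE \<subseteq> {{u, v} | u v. u \<in> N \<and> v \<in> N \<and> u \<noteq> v}" "is_tpath TE xs"
    "length xs \<ge> 2 \<or> hd xs \<in> N"
  shows "set xs \<subseteq> N"
proof
  fix x assume "x \<in> set xs"
  then obtain m where m: "m < length xs" "xs ! m = x" by (auto simp: in_set_conv_nth)
  have edge: "\<And>k. Suc k < length xs \<Longrightarrow> xs ! k \<in> N \<and> xs ! Suc k \<in> N"
  proof -
    fix k assume "Suc k < length xs"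
    then have "{xs ! k, xs ! Suc k} \<in> TE" using assms(2) unfolding is_tpath_def by auto
    then obtain u v where "{xs ! k, xs ! Suc k} = {u,v}" "u\<in>N" "v\<in>N" using assms(1) by blast
    then show "xs ! k \<in> N \<and> xs ! Suc k \<in> N" by (auto simp: doubleton_eq_iff)
  qed
  show "x \<in> N"
  proof (cases "Suc m < length xs")
    case True then show ?thesis using edge m by auto
  next
    case False
    show ?thesis
    proof (cases m)
      case 0
      then show ?thesis using assms(3) m False by (cases xs) auto
    next
      case (Suc k) then show ?thesis using edge m by auto
    qed
  qed
qed

lemma tpath_len: "is_tpath A xs \<Longrightarrow> (\<exists>x. xs = [x]) \<or> length xs \<ge> 2"
  by (cases xs; cases "tl xs") auto

lemma tpath_hd_last: "is_tpath A ys \<Longrightarrow> hd ys = last ys \<Longrightarrow> ys = [hd ys]"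
proof -
  assume a: "is_tpath A ys" "hd ys = last ys"
  show ?thesis
  proof (cases ys)
    case Nil then show ?thesis using a by simp
  next
    case (Cons y r)
    show ?thesis
    proof (cases r)
      case Nil then show ?thesis using Cons by simp
    next
      case (Cons z r')
      then have "last ys \<in> set r" using \<open>ys = y#r\<close> by simp
      moreover have "y \<notin> set r" using a(1) \<open>ys = y#r\<close> Cons by (simp add: tpath_Cons2)
      ultimately show ?thesis using a(2) \<open>ys = y#r\<close> by simp
    qed
  qed
qed




definition pairs :: "'b set \<Rightarrow> 'b set set" where
  "pairs N = {{u, v} | u v. u \<in> N \<and> v \<in> N \<and> u \<noteq> v}"

lemma pairsD: "{x,y} \<in> pairs N \<Longrightarrow> x \<in> N \<and> y \<in> N \<and> x \<noteq> y"
  unfolding pairs_def by (auto simp: doubleton_eq_iff)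

lemma tpath_hd: "is_tpath A (y#r) \<Longrightarrow> hd (y#r) = y" by simp

lemma glue_struct:
  assumes T1: "T1 \<subseteq> pairs N1" and T2: "T2 \<subseteq> pairs N2" and dj: "N1 \<inter> N2 = {}"
    and p: "p \<in> N1" and q: "q \<in> N2"
  shows "is_tpath (T1 \<union> T2 \<union> {{p,q}}) xs \<Longrightarrow> set xs \<subseteq> N1 \<union> N2 \<Longrightarrow>
    (is_tpath T1 xs \<and> set xs \<subseteq> N1) \<or> (is_tpath T2 xs \<and> set xs \<subseteq> N2) \<or>
    (\<exists>ys zs. xs = ys@zs \<and> is_tpath T1 ys \<and> set ys \<subseteq> N1 \<and> last ys = p \<and> is_tpath T2 zs \<and> set zs \<subseteq> N2 \<and> hd zs = q) \<or>
    (\<exists>ys zs. xs = ys@zs \<and> is_tpath T2 ys \<and> set ys \<subseteq> N2 \<and> last ys = q \<and> is_tpath T1 zs \<and> set zs \<subseteq> N1 \<and> hd zs = p)"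
proof (induction xs)
  case Nil then show ?case by simp
next
  case (Cons x xs)
  show ?case
  proof (cases xs)
    case Nil then show ?thesis using Cons.prems by auto
  next
    case (Cons y r)
    let ?T = "T1 \<union> T2 \<union> {{p,q}}"
    have e: "{x,y} \<in> ?T" and xn: "x \<notin> set xs" and tp: "is_tpath ?T xs"
      using Cons.prems(1) \<open>xs = y#r\<close> by (auto simp: tpath_Cons2)
    have sx: "set xs \<subseteq> N1 \<union> N2" using Cons.prems(2) by auto
    have hy: "hd xs = y" using \<open>xs = y#r\<close> by simp
    have yin: "y \<in> set xs" using \<open>xs = y#r\<close> by simp
    note IH = Cons.IH[OF tp sx]
    have hdys: "\<And>ys zs. xs = ys@zs \<Longrightarrow> ys \<noteq> [] \<Longrightarrow> hd ys = y" using hy by simp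
    have c2: "\<And>A. {x,y} \<in> A \<Longrightarrow> is_tpath A xs \<Longrightarrow> is_tpath A (x#xs)"
      using xn \<open>xs = y#r\<close> by (simp add: tpath_Cons2)
    have c2': "\<And>A ys. {x,y} \<in> A \<Longrightarrow> is_tpath A ys \<Longrightarrow> hd ys = y \<Longrightarrow> x \<notin> set ys \<Longrightarrow> is_tpath A (x#ys)"
      by (case_tac ys) (auto simp: tpath_Cons2)
    have e2: "{x,y} \<in> T1 \<or> {x,y} \<in> T2 \<or> {x,y} = {p,q}" using e by blast
    consider "{x,y} \<in> T1" | "{x,y} \<in> T2" | "x = p" "y = q" | "x = q" "y = p"
      using e2 unfolding doubleton_eq_iff by (elim disjE conjE) auto
    then show ?thesis
    proof cases
      case 1
      have pp: "{x,y} \<in> pairs N1" using 1 T1 by blast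
      from pairsD[OF pp] have xy: "x \<in> N1" "y \<in> N1" by auto
      from IH show ?thesis
      proof (elim disjE exE conjE)
        assume "is_tpath T1 xs" "set xs \<subseteq> N1" then show ?thesis using c2 1 xy by auto
      next
        assume "is_tpath T2 xs" "set xs \<subseteq> N2" then show ?thesis using yin xy dj by auto
      next
        fix ys zs assume h: "xs = ys@zs" "is_tpath T1 ys" "set ys \<subseteq> N1" "last ys = p" "is_tpath T2 zs" "set zs \<subseteq> N2" "hd zs = q"
        have "ys \<noteq> []" using h(2) by auto
        then have "is_tpath T1 (x#ys)" using c2'[OF 1 h(2)] hdys h(1) xn by auto
        moreover have "x#xs = (x#ys)@zs" using h(1) by simp
        ultimately show ?thesis using h xy \<open>ys \<noteq> []\<close> by (intro disjI2 disjI2 disjI1) (rule exI[of _ "x#ys"], auto)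
      next
        fix ys zs assume h: "xs = ys@zs" "is_tpath T2 ys" "set ys \<subseteq> N2" "last ys = q" "is_tpath T1 zs" "set zs \<subseteq> N1" "hd zs = p"
        have "ys \<noteq> []" using h(2) by auto
        then have "y \<in> N2" using hdys h(1,3) by (metis hd_in_set subsetD)
        then show ?thesis using xy dj by auto
      qed
    next
      case 2
      have pp: "{x,y} \<in> pairs N2" using 2 T2 by blast
      from pairsD[OF pp] have xy: "x \<in> N2" "y \<in> N2" by auto
      from IH show ?thesis
      proof (elim disjE exE conjE)
        assume "is_tpath T1 xs" "set xs \<subseteq> N1" then show ?thesis using yin xy dj by auto
      next
        assume "is_tpath T2 xs" "set xs \<subseteq> N2" then show ?thesis using c2 2 xy by auto
      next
        fix ys zs assume h: "xs = ys@zs" "is_tpath T1 ys" "set ys \<subseteq> N1" "last ys = p" "is_tpath T2 zs" "set zs \<subseteq> N2" "hd zs = q"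
        have "ys \<noteq> []" using h(2) by auto
        then have "y \<in> N1" using hdys h(1,3) by (metis hd_in_set subsetD)
        then show ?thesis using xy dj by auto
      next
        fix ys zs assume h: "xs = ys@zs" "is_tpath T2 ys" "set ys \<subseteq> N2" "last ys = q" "is_tpath T1 zs" "set zs \<subseteq> N1" "hd zs = p"
        have "ys \<noteq> []" using h(2) by auto
        then have "is_tpath T2 (x#ys)" using c2'[OF 2 h(2)] hdys h(1) xn by auto
        moreover have "x#xs = (x#ys)@zs" using h(1) by simp
        ultimately show ?thesis using h xy \<open>ys \<noteq> []\<close> by (intro disjI2 disjI2 disjI2) (rule exI[of _ "x#ys"], auto)
      qed
    next
      case 3
      from IH show ?thesis
      proof (elim disjE exE conjE)
        assume "is_tpath T1 xs" "set xs \<subseteq> N1" then show ?thesis using yin 3 q dj by auto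
      next
        assume h: "is_tpath T2 xs" "set xs \<subseteq> N2"
        have "x#xs = [p]@xs" using 3 by simp
        then show ?thesis using h 3 p hy by (intro disjI2 disjI2 disjI1) (rule exI[of _ "[p]"], auto)
      next
        fix ys zs assume h: "xs = ys@zs" "is_tpath T1 ys" "set ys \<subseteq> N1" "last ys = p" "is_tpath T2 zs" "set zs \<subseteq> N2" "hd zs = q"
        have "ys \<noteq> []" using h(2) by auto
        then have "y \<in> N1" using hdys h(1,3) by (metis hd_in_set subsetD)
        then show ?thesis using 3 q dj by auto
      next
        fix ys zs assume h: "xs = ys@zs" "is_tpath T2 ys" "set ys \<subseteq> N2" "last ys = q" "is_tpath T1 zs" "set zs \<subseteq> N1" "hd zs = p"
        have "zs \<noteq> []" using h(5) by auto
        then have "p \<in> set xs" using h(1,7) by (metis Un_iff hd_in_set set_append)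
        then show ?thesis using xn 3 by simp
      qed
    next
      case 4
      from IH show ?thesis
      proof (elim disjE exE conjE)
        assume h: "is_tpath T1 xs" "set xs \<subseteq> N1"
        have "x#xs = [q]@xs" using 4 by simp
        then show ?thesis using h 4 q hy by (intro disjI2 disjI2 disjI2) (rule exI[of _ "[q]"], auto)
      next
        assume "is_tpath T2 xs" "set xs \<subseteq> N2" then show ?thesis using yin 4 p dj by auto
      next
        fix ys zs assume h: "xs = ys@zs" "is_tpath T1 ys" "set ys \<subseteq> N1" "last ys = p" "is_tpath T2 zs" "set zs \<subseteq> N2" "hd zs = q"
        have "zs \<noteq> []" using h(5) by auto
        then have "q \<in> set xs" using h(1,7) by (metis Un_iff hd_in_set set_append)
        then show ?thesis using xn 4 by simp
      next
        fix ys zs assume h: "xs = ys@zs" "is_tpath T2 ys" "set ys \<subseteq> N2" "last ys = q" "is_tpath T1 zs" "set zs \<subseteq> N1" "hd zs = p"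
        have "ys \<noteq> []" using h(2) by auto
        then have "y \<in> N2" using hdys h(1,3) by (metis hd_in_set subsetD)
        then show ?thesis using 4 p dj by auto
      qed
    qed
  qed
qed




lemma tree_pairs: "is_tree N TE \<Longrightarrow> TE \<subseteq> pairs N"
  unfolding is_tree_def pairs_def by blast

lemma tpath_in_tree: "is_tree N TE \<Longrightarrow> is_tpath TE xs \<Longrightarrow> length xs \<ge> 2 \<or> hd xs \<in> N \<Longrightarrow> set xs \<subseteq> N"
  by (rule tpath_set[of TE N]) (auto simp: is_tree_def)

lemma td_cong1:
  assumes td: "tree_decomposition V E N TE X" and eq: "\<forall>i\<in>N. X i = Y i"
  shows "tree_decomposition V E N TE Y"
proof -
  have tr: "is_tree N TE" using td by (simp add: tree_decomposition_def)
  have pc: "\<forall>xs. is_tpath TE xs \<longrightarrow> (\<forall>j\<in>set xs. Y (hd xs) \<inter> Y (last xs) \<subseteq> Y j)"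
  proof (intro allI impI ballI)
    fix xs j assume xs: "is_tpath TE xs" and j: "j \<in> set xs"
    show "Y (hd xs) \<inter> Y (last xs) \<subseteq> Y j"
    proof (cases "\<exists>x. xs = [x]")
      case True then show ?thesis using j by auto
    next
      case False
      then have "length xs \<ge> 2" using tpath_len[OF xs] by auto
      then have s: "set xs \<subseteq> N" using tpath_in_tree[OF tr xs] by auto
      have ne: "xs \<noteq> []" using xs by auto
      have "hd xs \<in> N" "last xs \<in> N" "j \<in> N" using s ne j by auto
      moreover have "X (hd xs) \<inter> X (last xs) \<subseteq> X j" using td xs j by (simp add: tree_decomposition_def)
      ultimately show ?thesis using eq by auto
    qed
  qed
  show ?thesis using td eq pc unfolding tree_decomposition_def by auto
qed

lemma td_single:
  assumes "Y x = V" "\<forall>e\<in>E. e \<subseteq> V"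
  shows "tree_decomposition V E {x} {} Y"
proof -
  have np: "\<And>xs. is_tpath {} xs \<Longrightarrow> xs = [hd xs]"
  proof -
    fix xs assume h: "is_tpath {} xs"
    show "xs = [hd xs]"
    proof (cases xs)
      case Nil then show ?thesis using h by simp
    next
      case (Cons a r) then show ?thesis using h by (cases r) (auto simp: tpath_Cons2)
    qed
  qed
  have tr: "is_tree {x} {}"
    unfolding is_tree_def
  proof (intro conjI)
    show "\<forall>u\<in>{x}. \<forall>v\<in>{x}. \<exists>xs. is_tpath {} xs \<and> hd xs = u \<and> last xs = v"
      by (auto intro!: exI[of _ "[x]"])
    show "\<not> (\<exists>xs. is_tpath {} xs \<and> 3 \<le> length xs \<and> {last xs, hd xs} \<in> {})" by simp
    show "finite {x}" by simp
    show "{x} \<noteq> {}" by simp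
    show "{} \<subseteq> {{u, v} |u v. u \<in> {x} \<and> v \<in> {x} \<and> u \<noteq> v}" by simp
  qed
  show ?thesis unfolding tree_decomposition_def
  proof (intro conjI)
    show "\<forall>xs. is_tpath {} xs \<longrightarrow> (\<forall>j\<in>set xs. Y (hd xs) \<inter> Y (last xs) \<subseteq> Y j)"
    proof (intro allI impI ballI)
      fix xs :: "'b list" and j assume "is_tpath {} xs" "j \<in> set xs"
      then have "xs = [hd xs]" using np by blast
      then obtain a where "xs = [a]" by blast
      then show "Y (hd xs) \<inter> Y (last xs) \<subseteq> Y j" using \<open>j \<in> set xs\<close> by simp
    qed
  qed (use assms tr in auto)
qed

lemma td_mono: "tree_decomposition V E N TE X \<Longrightarrow> E' \<subseteq> E \<Longrightarrow> tree_decomposition V E' N TE X"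
  unfolding tree_decomposition_def by blast

lemma td_vmap:
  assumes inj: "inj_on f V" and td: "tree_decomposition V E N TE X" and Y: "\<forall>i\<in>N. Y i = f ` X i"
  shows "tree_decomposition (f ` V) ((`) f ` E) N TE Y"
proof -
  have tr: "is_tree N TE" and sub: "\<forall>i\<in>N. X i \<subseteq> V" using td by (auto simp: tree_decomposition_def)
  have pc: "\<forall>xs. is_tpath TE xs \<longrightarrow> (\<forall>j\<in>set xs. Y (hd xs) \<inter> Y (last xs) \<subseteq> Y j)"
  proof (intro allI impI ballI)
    fix xs j assume xs: "is_tpath TE xs" and j: "j \<in> set xs"
    show "Y (hd xs) \<inter> Y (last xs) \<subseteq> Y j"
    proof (cases "\<exists>x. xs = [x]")
      case True then show ?thesis using j by auto
    next
      case False
      then have "length xs \<ge> 2" using tpath_len[OF xs] by auto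
      then have s: "set xs \<subseteq> N" using tpath_in_tree[OF tr xs] by auto
      have ne: "xs \<noteq> []" using xs by auto
      have inN: "hd xs \<in> N" "last xs \<in> N" "j \<in> N" using s ne j by auto
      have "X (hd xs) \<inter> X (last xs) \<subseteq> X j" using td xs j by (simp add: tree_decomposition_def)
      then have "f ` (X (hd xs) \<inter> X (last xs)) \<subseteq> f ` X j" by blast
      moreover have "f ` (X (hd xs) \<inter> X (last xs)) = f ` X (hd xs) \<inter> f ` X (last xs)"
        using inj sub inN by (intro inj_on_image_Int) auto
      ultimately show ?thesis using Y inN by auto
    qed
  qed
  have cov: "\<forall>e\<in>(`) f ` E. \<exists>i\<in>N. e \<subseteq> Y i"
  proof
    fix e assume "e \<in> (`) f ` E"
    then obtain e0 where "e0 \<in> E" "e = f ` e0" by auto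
    then obtain i where "i \<in> N" "e0 \<subseteq> X i" using td by (auto simp: tree_decomposition_def)
    then show "\<exists>i\<in>N. e \<subseteq> Y i" using Y \<open>e = f ` e0\<close> by auto
  qed
  have un: "(\<Union>i\<in>N. Y i) = f ` V"
  proof -
    have "(\<Union>i\<in>N. Y i) = f ` (\<Union>i\<in>N. X i)" using Y by auto
    also have "\<dots> = f ` V" using td by (simp add: tree_decomposition_def)
    finally show ?thesis .
  qed
  have sub2: "\<forall>i\<in>N. Y i \<subseteq> f ` V" using Y sub by blast
  show ?thesis unfolding tree_decomposition_def using tr pc cov un sub2 by blast
qed

lemma td_nmap:
  assumes inj: "inj_on g N" and td: "tree_decomposition V E N TE X" and Y: "\<forall>i\<in>N. Y (g i) = X i"
  shows "tree_decomposition V E (g ` N) ((`) g ` TE) Y"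
proof -
  have tr: "is_tree N TE" using td by (auto simp: tree_decomposition_def)
  let ?h = "inv_into N g"
  let ?TE = "(`) g ` TE"
  have TEp: "TE \<subseteq> pairs N" using tree_pairs[OF tr] .
  have fwd: "\<And>u v. {u,v} \<in> TE \<Longrightarrow> {g u, g v} \<in> ?TE"
  proof -
    fix u v assume uv: "{u,v} \<in> TE"
    have "{g u, g v} = g ` {u,v}" by simp
    then show "{g u, g v} \<in> ?TE" using uv by blast
  qed
  have bwd: "\<And>u v. {u,v} \<in> ?TE \<Longrightarrow> {?h u, ?h v} \<in> TE"
  proof -
    fix u v assume "{u,v} \<in> ?TE"
    then obtain e where e: "e \<in> TE" "{u,v} = g ` e" by auto
    then obtain a b where ab: "e = {a,b}" "a \<in> N" "b \<in> N" using TEp unfolding pairs_def by blast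
    then have "{u,v} = {g a, g b}" using e by auto
    then have "{?h u, ?h v} = {?h (g a), ?h (g b)}" by (auto simp: doubleton_eq_iff)
    also have "\<dots> = {a,b}" using ab inj by simp
    finally show "{?h u, ?h v} \<in> TE" using e ab by simp
  qed
  have TE'p: "?TE \<subseteq> pairs (g ` N)"
  proof
    fix e assume "e \<in> ?TE"
    then obtain e0 where e0: "e0 \<in> TE" "e = g ` e0" by auto
    then obtain a b where ab: "e0 = {a,b}" "a \<in> N" "b \<in> N" "a \<noteq> b" using TEp unfolding pairs_def by blast
    then have "g a \<noteq> g b" using inj by (meson inj_on_eq_iff)
    then show "e \<in> pairs (g ` N)" using ab e0 unfolding pairs_def by auto
  qed
  have bk: "\<And>ys. is_tpath ?TE ys \<Longrightarrow> length ys \<ge> 2 \<Longrightarrow> set ys \<subseteq> g ` N \<and> is_tpath TE (map ?h ys)"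
  proof -
    fix ys assume ys: "is_tpath ?TE ys" "length ys \<ge> 2"
    have s: "set ys \<subseteq> g ` N" by (rule tpath_set[OF _ ys(1)]) (use TE'p ys(2) in \<open>auto simp: pairs_def\<close>)
    have "inj_on ?h (set ys)" using inj_on_inv_into[OF s] .
    then show "set ys \<subseteq> g ` N \<and> is_tpath TE (map ?h ys)" using s tpath_map[OF ys(1) _ bwd] by auto
  qed
  have is_tr: "is_tree (g ` N) ?TE"
    unfolding is_tree_def
  proof (intro conjI)
    show "finite (g ` N)" "g ` N \<noteq> {}" using tr by (auto simp: is_tree_def)
    show "?TE \<subseteq> {{u, v} |u v. u \<in> g ` N \<and> v \<in> g ` N \<and> u \<noteq> v}" using TE'p by (simp add: pairs_def)
    show "\<forall>u\<in>g ` N. \<forall>v\<in>g ` N. \<exists>xs. is_tpath ?TE xs \<and> hd xs = u \<and> last xs = v"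
    proof (intro ballI)
      fix u v assume "u \<in> g ` N" "v \<in> g ` N"
      then obtain a b where ab: "a \<in> N" "b \<in> N" "u = g a" "v = g b" by auto
      then obtain xs where xs: "is_tpath TE xs" "hd xs = a" "last xs = b" using tr unfolding is_tree_def by blast
      have s: "set xs \<subseteq> N" using tpath_in_tree[OF tr xs(1)] xs ab by auto
      have "is_tpath ?TE (map g xs)" using tpath_map[OF xs(1) _ fwd] inj s by (meson inj_on_subset)
      moreover have "xs \<noteq> []" using xs by auto
      ultimately show "\<exists>xs. is_tpath ?TE xs \<and> hd xs = u \<and> last xs = v" using xs ab
        by (intro exI[of _ "map g xs"]) (auto simp: hd_map last_map)
    qed
    show "\<not> (\<exists>xs. is_tpath ?TE xs \<and> 3 \<le> length xs \<and> {last xs, hd xs} \<in> ?TE)"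
    proof
      assume "\<exists>xs. is_tpath ?TE xs \<and> 3 \<le> length xs \<and> {last xs, hd xs} \<in> ?TE"
      then obtain ys where ys: "is_tpath ?TE ys" "3 \<le> length ys" "{last ys, hd ys} \<in> ?TE" by blast
      then have b: "set ys \<subseteq> g ` N" "is_tpath TE (map ?h ys)" using bk by auto
      have ne: "ys \<noteq> []" using ys by auto
      have "{?h (last ys), ?h (hd ys)} \<in> TE" using bwd ys(3) by blast
      then have "{last (map ?h ys), hd (map ?h ys)} \<in> TE" using ne by (simp add: hd_map last_map)
      then show False using tr b(2) ys(2) unfolding is_tree_def by force
    qed
  qed
  have pc: "\<forall>xs. is_tpath ?TE xs \<longrightarrow> (\<forall>j\<in>set xs. Y (hd xs) \<inter> Y (last xs) \<subseteq> Y j)"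
  proof (intro allI impI ballI)
    fix xs j assume xs: "is_tpath ?TE xs" and j: "j \<in> set xs"
    show "Y (hd xs) \<inter> Y (last xs) \<subseteq> Y j"
    proof (cases "\<exists>x. xs = [x]")
      case True then show ?thesis using j by auto
    next
      case False
      then have "length xs \<ge> 2" using tpath_len[OF xs] by auto
      then have b: "set xs \<subseteq> g ` N" "is_tpath TE (map ?h xs)" using bk xs by auto
      have ne: "xs \<noteq> []" using xs by auto
      have "?h j \<in> set (map ?h xs)" using j by auto
      then have "X (hd (map ?h xs)) \<inter> X (last (map ?h xs)) \<subseteq> X (?h j)" using td b(2) by (simp add: tree_decomposition_def)
      then have "X (?h (hd xs)) \<inter> X (?h (last xs)) \<subseteq> X (?h j)" using ne by (simp add: hd_map last_map)
      moreover have "\<And>z. z \<in> set xs \<Longrightarrow> Y z = X (?h z)"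
      proof -
        fix z assume "z \<in> set xs"
        then obtain a where "a \<in> N" "z = g a" using b by auto
        then show "Y z = X (?h z)" using Y inj by simp
      qed
      ultimately show ?thesis using ne j by simp
    qed
  qed
  have cov: "\<forall>e\<in>E. \<exists>i\<in>g ` N. e \<subseteq> Y i" using td Y by (force simp: tree_decomposition_def)
  have un: "(\<Union>i\<in>g ` N. Y i) = V" using td Y by (simp add: tree_decomposition_def)
  have sub: "\<forall>i\<in>g ` N. Y i \<subseteq> V" using td Y by (simp add: tree_decomposition_def)
  show ?thesis unfolding tree_decomposition_def using is_tr pc cov un sub by blast
qed




lemma td_tree: "tree_decomposition V E N TE X \<Longrightarrow> is_tree N TE"
  by (simp add: tree_decomposition_def)

lemma pair_side:
  assumes "{a,b} \<in> T1 \<union> T2 \<union> {{p,q}}" "T1 \<subseteq> pairs N1" "T2 \<subseteq> pairs N2" "N1 \<inter> N2 = {}" "a \<in> N1" "b \<in> N2"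
  shows "(a = p \<and> b = q) \<or> (a = q \<and> b = p)"
proof -
  have "{a,b} \<notin> T1"
  proof
    assume "{a,b} \<in> T1" then have "{a,b} \<in> pairs N1" using assms(2) by blast
    then have "b \<in> N1" using pairsD[of a b N1] by simp
    then show False using assms(4,6) by blast
  qed
  moreover have "{a,b} \<notin> T2"
  proof
    assume "{a,b} \<in> T2" then have "{a,b} \<in> pairs N2" using assms(3) by blast
    then have "a \<in> N2" using pairsD[of a b N2] by simp
    then show False using assms(4,5) by blast
  qed
  ultimately have "{a,b} = {p,q}" using assms(1) by blast
  then show ?thesis by (simp add: doubleton_eq_iff)
qed

lemma glue:
  assumes t1: "tree_decomposition U1 E1 N1 T1 Y" and t2: "tree_decomposition U2 E2 N2 T2 Y"
    and dj: "N1 \<inter> N2 = {}" and p: "p \<in> N1" and q: "q \<in> N2"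
    and i1: "U1 \<inter> U2 \<subseteq> Y p" and i2: "U1 \<inter> U2 \<subseteq> Y q"
  shows "tree_decomposition (U1 \<union> U2) (E1 \<union> E2) (N1 \<union> N2) (T1 \<union> T2 \<union> {{p,q}}) Y"
proof -
  let ?T = "T1 \<union> T2 \<union> {{p,q}}"
  have tr1: "is_tree N1 T1" and tr2: "is_tree N2 T2" using t1 t2 by (auto simp: tree_decomposition_def)
  have P1: "T1 \<subseteq> pairs N1" and P2: "T2 \<subseteq> pairs N2" using tree_pairs tr1 tr2 by auto
  have pq: "p \<noteq> q" using p q dj by auto
  have PT: "?T \<subseteq> pairs (N1 \<union> N2)"
  proof -
    have "pairs N1 \<subseteq> pairs (N1 \<union> N2)" "pairs N2 \<subseteq> pairs (N1 \<union> N2)" unfolding pairs_def by blast+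
    moreover have "{p,q} \<in> pairs (N1 \<union> N2)" using p q pq unfolding pairs_def by blast
    ultimately show ?thesis using P1 P2 by blast
  qed
  note str = glue_struct[OF P1 P2 dj p q]
  have con1: "\<And>u v. u \<in> N1 \<Longrightarrow> v \<in> N1 \<Longrightarrow> \<exists>xs. is_tpath T1 xs \<and> hd xs = u \<and> last xs = v \<and> set xs \<subseteq> N1"
  proof -
    fix u v assume "u \<in> N1" "v \<in> N1"
    then obtain xs where xs: "is_tpath T1 xs" "hd xs = u" "last xs = v" using tr1 unfolding is_tree_def by blast
    then show "\<exists>xs. is_tpath T1 xs \<and> hd xs = u \<and> last xs = v \<and> set xs \<subseteq> N1"
      using tpath_in_tree[OF tr1 xs(1)] \<open>u \<in> N1\<close> by blast
  qed
  have con2: "\<And>u v. u \<in> N2 \<Longrightarrow> v \<in> N2 \<Longrightarrow> \<exists>xs. is_tpath T2 xs \<and> hd xs = u \<and> last xs = v \<and> set xs \<subseteq> N2"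
  proof -
    fix u v assume "u \<in> N2" "v \<in> N2"
    then obtain xs where xs: "is_tpath T2 xs" "hd xs = u" "last xs = v" using tr2 unfolding is_tree_def by blast
    then show "\<exists>xs. is_tpath T2 xs \<and> hd xs = u \<and> last xs = v \<and> set xs \<subseteq> N2"
      using tpath_in_tree[OF tr2 xs(1)] \<open>u \<in> N2\<close> by blast
  qed
  have cat: "\<And>ys zs. is_tpath ?T ys \<Longrightarrow> is_tpath ?T zs \<Longrightarrow> {last ys, hd zs} \<in> ?T \<Longrightarrow> set ys \<inter> set zs = {}
     \<Longrightarrow> is_tpath ?T (ys @ zs) \<and> hd (ys@zs) = hd ys \<and> last (ys@zs) = last zs"
  proof -
    fix ys zs assume h: "is_tpath ?T ys" "is_tpath ?T zs" "{last ys, hd zs} \<in> ?T" "set ys \<inter> set zs = {}"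
    have ne: "ys \<noteq> []" "zs \<noteq> []" using h by auto
    then show "is_tpath ?T (ys @ zs) \<and> hd (ys@zs) = hd ys \<and> last (ys@zs) = last zs" using h tpath_append[OF ne] by simp
  qed
  have m1: "\<And>xs. is_tpath T1 xs \<Longrightarrow> is_tpath ?T xs" by (erule tpath_mono) blast
  have m2: "\<And>xs. is_tpath T2 xs \<Longrightarrow> is_tpath ?T xs" by (erule tpath_mono) blast
  have istree: "is_tree (N1 \<union> N2) ?T"
    unfolding is_tree_def
  proof (intro conjI)
    show "finite (N1 \<union> N2)" "N1 \<union> N2 \<noteq> {}" using tr1 tr2 by (auto simp: is_tree_def)
    show "?T \<subseteq> {{u, v} |u v. u \<in> N1 \<union> N2 \<and> v \<in> N1 \<union> N2 \<and> u \<noteq> v}" using PT by (simp add: pairs_def)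
    show "\<forall>u\<in>N1 \<union> N2. \<forall>v\<in>N1 \<union> N2. \<exists>xs. is_tpath ?T xs \<and> hd xs = u \<and> last xs = v"
    proof (intro ballI)
      fix u v assume u: "u \<in> N1 \<union> N2" and v: "v \<in> N1 \<union> N2"
      show "\<exists>xs. is_tpath ?T xs \<and> hd xs = u \<and> last xs = v"
      proof (cases "u \<in> N1")
        case uT: True
        show ?thesis
        proof (cases "v \<in> N1")
          case True then show ?thesis using con1[OF uT True] m1 by blast
        next
          case False
          then have vN: "v \<in> N2" using v by auto
          obtain ys where ys: "is_tpath T1 ys" "hd ys = u" "last ys = p" "set ys \<subseteq> N1" using con1[OF uT p] by blast
          obtain zs where zs: "is_tpath T2 zs" "hd zs = q" "last zs = v" "set zs \<subseteq> N2" using con2[OF q vN] by blast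
          have "set ys \<inter> set zs = {}" using ys zs dj by blast
          then show ?thesis using cat[OF m1[OF ys(1)] m2[OF zs(1)]] ys zs by auto
        qed
      next
        case uF: False
        then have uT: "u \<in> N2" using u by auto
        show ?thesis
        proof (cases "v \<in> N2")
          case True then show ?thesis using con2[OF uT True] m2 by blast
        next
          case False
          then have vN: "v \<in> N1" using v by auto
          obtain ys where ys: "is_tpath T2 ys" "hd ys = u" "last ys = q" "set ys \<subseteq> N2" using con2[OF uT q] by blast
          obtain zs where zs: "is_tpath T1 zs" "hd zs = p" "last zs = v" "set zs \<subseteq> N1" using con1[OF p vN] by blast
          have "set ys \<inter> set zs = {}" using ys zs dj by blast
          then show ?thesis using cat[OF m2[OF ys(1)] m1[OF zs(1)]] ys zs by auto
        qed
      qed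
    qed
    show "\<not> (\<exists>xs. is_tpath ?T xs \<and> 3 \<le> length xs \<and> {last xs, hd xs} \<in> ?T)"
    proof
      assume "\<exists>xs. is_tpath ?T xs \<and> 3 \<le> length xs \<and> {last xs, hd xs} \<in> ?T"
      then obtain xs where xs: "is_tpath ?T xs" "3 \<le> length xs" "{last xs, hd xs} \<in> ?T" by blast
      have s: "set xs \<subseteq> N1 \<union> N2" using tpath_set[OF _ xs(1)] PT xs(2) unfolding pairs_def by auto
      have ne: "xs \<noteq> []" using xs by auto
      have hl: "hd xs \<in> set xs" "last xs \<in> set xs" using ne by auto
      have notb1: "\<And>a b. a \<in> N1 \<Longrightarrow> b \<in> N1 \<Longrightarrow> {a,b} \<in> ?T \<Longrightarrow> {a,b} \<in> T1"
      proof -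
        fix a b assume ab: "a \<in> N1" "b \<in> N1" "{a,b} \<in> ?T"
        have "{a,b} \<notin> T2"
        proof
          assume "{a,b} \<in> T2" then have "{a,b} \<in> pairs N2" using P2 by blast
          then show False using pairsD[of a b] ab dj by blast
        qed
        moreover have "{a,b} \<noteq> {p,q}" using ab q dj by (auto simp: doubleton_eq_iff)
        ultimately show "{a,b} \<in> T1" using ab by blast
      qed
      have notb2: "\<And>a b. a \<in> N2 \<Longrightarrow> b \<in> N2 \<Longrightarrow> {a,b} \<in> ?T \<Longrightarrow> {a,b} \<in> T2"
      proof -
        fix a b assume ab: "a \<in> N2" "b \<in> N2" "{a,b} \<in> ?T"
        have "{a,b} \<notin> T1"
        proof
          assume "{a,b} \<in> T1" then have "{a,b} \<in> pairs N1" using P1 by blast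
          then show False using pairsD[of a b] ab dj by blast
        qed
        moreover have "{a,b} \<noteq> {p,q}" using ab p dj by (auto simp: doubleton_eq_iff)
        ultimately show "{a,b} \<in> T2" using ab by blast
      qed
      have cyc1: "\<not> (\<exists>xs. is_tpath T1 xs \<and> 3 \<le> length xs \<and> {last xs, hd xs} \<in> T1)" using tr1 by (simp add: is_tree_def)
      have cyc2: "\<not> (\<exists>xs. is_tpath T2 xs \<and> 3 \<le> length xs \<and> {last xs, hd xs} \<in> T2)" using tr2 by (simp add: is_tree_def)
      from str[OF xs(1) s] show False
      proof (elim disjE exE conjE)
        assume "is_tpath T1 xs" "set xs \<subseteq> N1"
        then show False using notb1[OF _ _ xs(3)] hl cyc1 xs(2) by blast
      next
        assume "is_tpath T2 xs" "set xs \<subseteq> N2"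
        then show False using notb2[OF _ _ xs(3)] hl cyc2 xs(2) by blast
      next
        fix ys zs assume h: "xs = ys@zs" "is_tpath T1 ys" "set ys \<subseteq> N1" "last ys = p" "is_tpath T2 zs" "set zs \<subseteq> N2" "hd zs = q"
        have ne2: "ys \<noteq> []" "zs \<noteq> []" using h by auto
        have "hd xs = hd ys" "last xs = last zs" using h(1) ne2 by auto
        moreover have "hd ys \<in> N1" "last zs \<in> N2" using ne2 h by auto
        ultimately have "(hd xs = p \<and> last xs = q) \<or> (hd xs = q \<and> last xs = p)"
          using pair_side[of "hd xs" "last xs" T1 T2 p q N1 N2] xs(3) P1 P2 dj by (simp add: insert_commute)
        then have "hd ys = p" "last zs = q" using \<open>hd xs = hd ys\<close> \<open>last xs = last zs\<close> \<open>hd ys \<in> N1\<close> \<open>last zs \<in> N2\<close> dj p q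
          by auto
        then have "ys = [p]" "zs = [q]" using tpath_hd_last[OF h(2)] tpath_hd_last[OF h(5)] h(4,7) by auto
        then show False using h(1) xs(2) by simp
      next
        fix ys zs assume h: "xs = ys@zs" "is_tpath T2 ys" "set ys \<subseteq> N2" "last ys = q" "is_tpath T1 zs" "set zs \<subseteq> N1" "hd zs = p"
        have ne2: "ys \<noteq> []" "zs \<noteq> []" using h by auto
        have "hd xs = hd ys" "last xs = last zs" using h(1) ne2 by auto
        moreover have "hd ys \<in> N2" "last zs \<in> N1" using ne2 h by auto
        ultimately have "(last xs = p \<and> hd xs = q) \<or> (last xs = q \<and> hd xs = p)"
          using pair_side[of "last xs" "hd xs" T1 T2 p q N1 N2] xs(3) P1 P2 dj by simp
        then have "hd ys = q" "last zs = p" using \<open>hd xs = hd ys\<close> \<open>last xs = last zs\<close> \<open>hd ys \<in> N2\<close> \<open>last zs \<in> N1\<close> dj p q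
          by auto
        then have "ys = [q]" "zs = [p]" using tpath_hd_last[OF h(2)] tpath_hd_last[OF h(5)] h(4,7) by auto
        then show False using h(1) xs(2) by simp
      qed
    qed
  qed
  have pc: "\<forall>xs. is_tpath ?T xs \<longrightarrow> (\<forall>j\<in>set xs. Y (hd xs) \<inter> Y (last xs) \<subseteq> Y j)"
  proof (intro allI impI ballI)
    fix xs j assume xs: "is_tpath ?T xs" and j: "j \<in> set xs"
    show "Y (hd xs) \<inter> Y (last xs) \<subseteq> Y j"
    proof (cases "\<exists>x. xs = [x]")
      case True then show ?thesis using j by auto
    next
      case False
      then have "length xs \<ge> 2" using tpath_len[OF xs] by auto
      then have s: "set xs \<subseteq> N1 \<union> N2" using tpath_set[OF _ xs] PT unfolding pairs_def by auto
      have pc1: "\<And>zs j. is_tpath T1 zs \<Longrightarrow> j \<in> set zs \<Longrightarrow> Y (hd zs) \<inter> Y (last zs) \<subseteq> Y j"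
        using t1 by (simp add: tree_decomposition_def)
      have pc2: "\<And>zs j. is_tpath T2 zs \<Longrightarrow> j \<in> set zs \<Longrightarrow> Y (hd zs) \<inter> Y (last zs) \<subseteq> Y j"
        using t2 by (simp add: tree_decomposition_def)
      have s1: "\<And>i. i \<in> N1 \<Longrightarrow> Y i \<subseteq> U1" using t1 by (simp add: tree_decomposition_def)
      have s2: "\<And>i. i \<in> N2 \<Longrightarrow> Y i \<subseteq> U2" using t2 by (simp add: tree_decomposition_def)
      from str[OF xs s] show ?thesis
      proof (elim disjE exE conjE)
        assume "is_tpath T1 xs" then show ?thesis using pc1 j by blast
      next
        assume "is_tpath T2 xs" then show ?thesis using pc2 j by blast
      next
        fix ys zs assume h: "xs = ys@zs" "is_tpath T1 ys" "set ys \<subseteq> N1" "last ys = p" "is_tpath T2 zs" "set zs \<subseteq> N2" "hd zs = q"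
        have ne2: "ys \<noteq> []" "zs \<noteq> []" using h by auto
        have hl: "hd xs = hd ys" "last xs = last zs" using h(1) ne2 by auto
        have hin: "hd ys \<in> N1" "last zs \<in> N2" using ne2 h by auto
        have "Y (hd xs) \<subseteq> U1" "Y (last xs) \<subseteq> U2" using hl hin s1 s2 by simp_all
        then have A: "Y (hd xs) \<inter> Y (last xs) \<subseteq> U1 \<inter> U2" by blast
        show ?thesis
        proof (cases "j \<in> set ys")
          case True
          have "Y (hd ys) \<inter> Y p \<subseteq> Y j" using pc1[OF h(2) True] h(4) by simp
          then show ?thesis using A i1 unfolding hl by blast
        next
          case False
          then have jz: "j \<in> set zs" using j h(1) by auto
          have "Y q \<inter> Y (last zs) \<subseteq> Y j" using pc2[OF h(5) jz] h(7) by simp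
          then show ?thesis using A i2 unfolding hl by blast
        qed
      next
        fix ys zs assume h: "xs = ys@zs" "is_tpath T2 ys" "set ys \<subseteq> N2" "last ys = q" "is_tpath T1 zs" "set zs \<subseteq> N1" "hd zs = p"
        have ne2: "ys \<noteq> []" "zs \<noteq> []" using h by auto
        have hl: "hd xs = hd ys" "last xs = last zs" using h(1) ne2 by auto
        have hin: "hd ys \<in> N2" "last zs \<in> N1" using ne2 h by auto
        have "Y (hd xs) \<subseteq> U2" "Y (last xs) \<subseteq> U1" using hl hin s1 s2 by simp_all
        then have A: "Y (hd xs) \<inter> Y (last xs) \<subseteq> U1 \<inter> U2" by blast
        show ?thesis
        proof (cases "j \<in> set ys")
          case True
          have "Y (hd ys) \<inter> Y q \<subseteq> Y j" using pc2[OF h(2) True] h(4) by simp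
          then show ?thesis using A i2 unfolding hl by blast
        next
          case False
          then have jz: "j \<in> set zs" using j h(1) by auto
          have "Y p \<inter> Y (last zs) \<subseteq> Y j" using pc1[OF h(5) jz] h(7) by simp
          then show ?thesis using A i1 unfolding hl by blast
        qed
      qed
    qed
  qed
  have sub: "\<forall>i\<in>N1 \<union> N2. Y i \<subseteq> U1 \<union> U2" using t1 t2 by (auto simp: tree_decomposition_def)
  have un: "(\<Union>i\<in>N1 \<union> N2. Y i) = U1 \<union> U2" using t1 t2 by (auto simp: tree_decomposition_def)
  have c1: "\<forall>e\<in>E1. \<exists>i\<in>N1. e \<subseteq> Y i" "\<forall>e\<in>E2. \<exists>i\<in>N2. e \<subseteq> Y i"
    using t1 t2 unfolding tree_decomposition_def by blast+
  have cov: "\<forall>e\<in>E1 \<union> E2. \<exists>i\<in>N1 \<union> N2. e \<subseteq> Y i" using c1 by blast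
  show ?thesis unfolding tree_decomposition_def using istree pc sub un cov by blast
qed




lemma glue_many:
  assumes fin: "finite I"
  and base: "tree_decomposition V E N TE Y"
  shows "(\<forall>x\<in>I. \<exists>TT. tree_decomposition (VV x) (EE x) (NN x) TT Y) \<Longrightarrow>
    (\<forall>x\<in>I. NN x \<inter> N = {}) \<Longrightarrow>
    (\<forall>x\<in>I. \<forall>y\<in>I. x \<noteq> y \<longrightarrow> NN x \<inter> NN y = {}) \<Longrightarrow>
    (\<forall>x\<in>I. \<exists>p\<in>N. \<exists>q\<in>NN x. V \<inter> VV x \<subseteq> Y p \<and> V \<inter> VV x \<subseteq> Y q) \<Longrightarrow>
    (\<forall>x\<in>I. \<forall>y\<in>I. x \<noteq> y \<longrightarrow> VV x \<inter> VV y \<subseteq> V) \<Longrightarrow>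
    \<exists>TT. tree_decomposition (V \<union> (\<Union>x\<in>I. VV x)) (E \<union> (\<Union>x\<in>I. EE x)) (N \<union> (\<Union>x\<in>I. NN x)) TT Y"
  using fin
proof (induction I rule: finite_induct)
  case empty then show ?case using base by (intro exI[of _ TE]) simp
next
  case (insert x F)
  note P = insert.prems
  have h1: "\<forall>x\<in>F. \<exists>TT. tree_decomposition (VV x) (EE x) (NN x) TT Y" using P(1) by simp
  have h2: "\<forall>x\<in>F. NN x \<inter> N = {}" using P(2) by simp
  have h3: "\<forall>x\<in>F. \<forall>y\<in>F. x \<noteq> y \<longrightarrow> NN x \<inter> NN y = {}" using P(3) by simp
  have h4: "\<forall>x\<in>F. \<exists>p\<in>N. \<exists>q\<in>NN x. V \<inter> VV x \<subseteq> Y p \<and> V \<inter> VV x \<subseteq> Y q" using P(4) by simp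
  have h5: "\<forall>x\<in>F. \<forall>y\<in>F. x \<noteq> y \<longrightarrow> VV x \<inter> VV y \<subseteq> V" using P(5) by simp
  obtain T0 where T0: "tree_decomposition (V \<union> (\<Union>x\<in>F. VV x)) (E \<union> (\<Union>x\<in>F. EE x)) (N \<union> (\<Union>x\<in>F. NN x)) T0 Y"
    using insert.IH[OF h1 h2 h3 h4 h5] by blast
  obtain Tx where Tx: "tree_decomposition (VV x) (EE x) (NN x) Tx Y" using P(1) by blast
  obtain p q where pq: "p \<in> N" "q \<in> NN x" "V \<inter> VV x \<subseteq> Y p" "V \<inter> VV x \<subseteq> Y q" using P(4) by blast
  have dj: "(N \<union> (\<Union>x\<in>F. NN x)) \<inter> NN x = {}"
  proof -
    have "NN x \<inter> N = {}" using P(2) by simp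
    moreover have "\<forall>y\<in>F. NN x \<inter> NN y = {}" using insert.prems insert.hyps by (metis insert_iff)
    ultimately show ?thesis by blast
  qed
  have vi: "(V \<union> (\<Union>x\<in>F. VV x)) \<inter> VV x \<subseteq> V \<inter> VV x"
  proof -
    have "\<forall>y\<in>F. VV x \<inter> VV y \<subseteq> V" using P(5) insert.hyps(2) by auto
    then show ?thesis by blast
  qed
  have g: "tree_decomposition ((V \<union> (\<Union>x\<in>F. VV x)) \<union> VV x) ((E \<union> (\<Union>x\<in>F. EE x)) \<union> EE x)
      ((N \<union> (\<Union>x\<in>F. NN x)) \<union> NN x) (T0 \<union> Tx \<union> {{p,q}}) Y"
    by (rule glue[OF T0 Tx dj]) (use pq vi in auto)
  have e1: "(V \<union> (\<Union>x\<in>F. VV x)) \<union> VV x = V \<union> (\<Union>x\<in>insert x F. VV x)" by auto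
  have e2: "(E \<union> (\<Union>x\<in>F. EE x)) \<union> EE x = E \<union> (\<Union>x\<in>insert x F. EE x)" by auto
  have e3: "(N \<union> (\<Union>x\<in>F. NN x)) \<union> NN x = N \<union> (\<Union>x\<in>insert x F. NN x)" by auto
  show ?case using g unfolding e1 e2 e3 by blast
qed

lemma chain:
  fixes f :: "nat \<Rightarrow> 'a" and g :: "nat \<Rightarrow> 'b"
  assumes inj: "inj g"
    and fresh: "\<And>m m'. m' \<le> m \<Longrightarrow> f (Suc m) = f m' \<Longrightarrow> f (Suc m) \<in> K"
    and Yg: "\<And>m. Y (g m) = K \<union> {f m, f (Suc m)}"
  shows "M \<ge> 1 \<Longrightarrow> \<exists>TE. tree_decomposition (K \<union> f ` {..M}) {{f m, f (Suc m)} | m. m < M} (g ` {..<M}) TE Y"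
proof (induction M rule: nat_induct_at_least)
  case base
  have "tree_decomposition (K \<union> f ` {..1}) {{f m, f (Suc m)} | m. m < 1} {g 0} {} Y"
  proof (rule td_single)
    have "f ` {..1::nat} = {f 0, f 1}" by (auto simp: le_Suc_eq)
    then show "Y (g 0) = K \<union> f ` {..1}" using Yg by simp
    show "\<forall>e\<in>{{f m, f (Suc m)} |m. m < 1}. e \<subseteq> K \<union> f ` {..1}" by auto
  qed
  moreover have "g ` {..<1} = {g 0}" by auto
  ultimately show ?case by auto
next
  case (Suc M)
  then obtain T0 where T0: "tree_decomposition (K \<union> f ` {..M}) {{f m, f (Suc m)} | m. m < M} (g ` {..<M}) T0 Y" by blast
  have T1: "tree_decomposition (K \<union> {f M, f (Suc M)}) {{f M, f (Suc M)}} {g M} {} Y"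
    by (rule td_single) (use Yg in auto)
  have dj: "g ` {..<M} \<inter> {g M} = {}" using inj by (auto simp: inj_eq)
  obtain M' where M': "M = Suc M'" using Suc.hyps by (cases M) auto
  have vi: "(K \<union> f ` {..M}) \<inter> (K \<union> {f M, f (Suc M)}) \<subseteq> K \<union> {f M}"
  proof
    fix z assume z: "z \<in> (K \<union> f ` {..M}) \<inter> (K \<union> {f M, f (Suc M)})"
    show "z \<in> K \<union> {f M}"
    proof (cases "z = f (Suc M) \<and> z \<notin> K \<and> z \<noteq> f M")
      case True
      then obtain m' where "m' \<le> M" "z = f m'" using z by auto
      then show ?thesis using fresh[of m' M] True by auto
    qed (use z in auto)
  qed
  have g: "tree_decomposition ((K \<union> f ` {..M}) \<union> (K \<union> {f M, f (Suc M)})) ({{f m, f (Suc m)} | m. m < M} \<union> {{f M, f (Suc M)}})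
     (g ` {..<M} \<union> {g M}) (T0 \<union> {} \<union> {{g M', g M}}) Y"
    by (rule glue[OF T0 T1 dj]) (use vi Yg M' in auto)
  have e1: "(K \<union> f ` {..M}) \<union> (K \<union> {f M, f (Suc M)}) = K \<union> f ` {..Suc M}" by (auto simp: le_Suc_eq)
  have e2: "{{f m, f (Suc m)} | m. m < M} \<union> {{f M, f (Suc M)}} = {{f m, f (Suc m)} | m. m < Suc M}" by (auto simp: less_Suc_eq)
  have e3: "g ` {..<M} \<union> {g M} = g ` {..<Suc M}" by (auto simp: lessThan_Suc)
  show ?case using g unfolding e1 e2 e3 by blast
qed




type_synonym nd = "(v1 \<times> v1) list \<times> nat \<times> nat \<times> nat \<times> nat"

definition Ysk :: "nat \<Rightarrow> nd \<Rightarrow> v1 set" where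
  "Ysk n x = (case snd x of (t,j,k,m) \<Rightarrow>
     if t = 0 then {S,T} \<union> L ` {..<n}
     else if t = 1 then {T, R j} \<union> L ` {..<n}
     else if t = 2 then {S, L j} \<union> {nodeL n j k m, nodeL n j k (Suc m)}
     else {R j, T} \<union> {nodeR n j k m, nodeR n j k (Suc m)})"

definition Esk :: "nat \<Rightarrow> v1 set set" where
  "Esk n = {{a,b} | a b. (a,b) \<in> D1 n} \<union> {{S,T}}"

lemma nodeL_cases: "nodeL n j k m = S \<or> nodeL n j k m = L j \<or> nodeL n j k m = PL j k m"
  by (simp add: nodeL_def)
lemma nodeR_cases: "nodeR n j k m = R j \<or> nodeR n j k m = T \<or> nodeR n j k m = PR j k m"
  by (simp add: nodeR_def)

lemma card4: "card {a,b,c,d} \<le> 4"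
proof -
  have "{a,b,c,d} = set [a,b,c,d]" by simp
  then show ?thesis using card_length[of "[a,b,c,d]"] by simp
qed

lemma card_chainL:
  assumes "n \<ge> 1" "m < n"
  shows "card ({S, L j} \<union> {nodeL n j k m, nodeL n j k (Suc m)}) \<le> n + 2"
proof (cases "n = 1")
  case True
  then have "m = 0" using assms by simp
  then have "{S, L j} \<union> {nodeL n j k m, nodeL n j k (Suc m)} = {S, L j}" using True by (simp add: nodeL_def)
  then show ?thesis by (simp add: card_insert_if)
next
  case False
  have "card ({S, L j} \<union> {nodeL n j k m, nodeL n j k (Suc m)}) \<le> 4" using card4 by simp
  then show ?thesis using False assms by simp
qed

lemma card_chainR:
  assumes "n \<ge> 1" "m < n"
  shows "card ({R j, T} \<union> {nodeR n j k m, nodeR n j k (Suc m)}) \<le> n + 2"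
proof (cases "n = 1")
  case True
  then have "m = 0" using assms by simp
  then have "{R j, T} \<union> {nodeR n j k m, nodeR n j k (Suc m)} = {R j, T}" using True by (simp add: nodeR_def)
  then show ?thesis by (simp add: card_insert_if)
next
  case False
  have "card ({R j, T} \<union> {nodeR n j k m, nodeR n j k (Suc m)}) \<le> 4" using card4 by simp
  then show ?thesis using False assms by simp
qed

lemma card_C: "card ({a,b} \<union> L ` {..<n}) \<le> n + 2"
proof -
  have "card ({a,b} \<union> L ` {..<n}) \<le> card {a,b} + card (L ` {..<n})" by (rule card_Un_le)
  also have "\<dots> \<le> 2 + n" using card_image_le[of "{..<n}" L] by (simp add: card_insert_if; linarith)
  finally show ?thesis by simp
qed

lemma freshL: "m' \<le> m \<Longrightarrow> nodeL n j k (Suc m) = nodeL n j k m' \<Longrightarrow> nodeL n j k (Suc m) \<in> {S, L j}"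
  by (auto simp: nodeL_def split: if_splits)
lemma freshR: "m' \<le> m \<Longrightarrow> nodeR n j k (Suc m) = nodeR n j k m' \<Longrightarrow> nodeR n j k (Suc m) \<in> {R j, T}"
  by (auto simp: nodeR_def split: if_splits)




lemma skeleton:
  assumes n1: "n \<ge> 1"
  shows "\<exists>N TE. tree_decomposition (V1 n) (Esk n) N TE (Ysk n) \<and>
     (\<forall>x\<in>N. fst x = [] \<and> finite (Ysk n x) \<and> card (Ysk n x) \<le> n + 2)"
proof -
  define Y where "Y = Ysk n"
  define C where "C = {S,T} \<union> L ` {..<n}"
  define c0 :: nd where "c0 = ([], (0,0,0,0))"
  have t1: "tree_decomposition C {{S,T}} {c0} {} Y"
    by (rule td_single) (auto simp: C_def c0_def Y_def Ysk_def)
  define VB where "VB k = {T, R k} \<union> L ` {..<n}" for k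
  define EB where "EB k = {{L j, R k} | j. j < n}" for k
  define NB :: "nat \<Rightarrow> nd set" where "NB k = {([], (1,k,0,0))}" for k
  have s2: "\<exists>TT. tree_decomposition (C \<union> (\<Union>x\<in>{..<n}. VB x)) ({{S,T}} \<union> (\<Union>x\<in>{..<n}. EB x)) ({c0} \<union> (\<Union>x\<in>{..<n}. NB x)) TT Y"
  proof (rule glue_many[OF _ t1])
    show "\<forall>x\<in>{..<n}. \<exists>TT. tree_decomposition (VB x) (EB x) (NB x) TT Y"
    proof
      fix x assume "x \<in> {..<n}"
      have "tree_decomposition (VB x) (EB x) (NB x) {} Y"
        unfolding NB_def by (rule td_single) (auto simp: VB_def EB_def Y_def Ysk_def)
      then show "\<exists>TT. tree_decomposition (VB x) (EB x) (NB x) TT Y" by blast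
    qed
    show "\<forall>x\<in>{..<n}. NB x \<inter> {c0} = {}" by (auto simp: NB_def c0_def)
    show "\<forall>x\<in>{..<n}. \<forall>y\<in>{..<n}. x \<noteq> y \<longrightarrow> NB x \<inter> NB y = {}" by (auto simp: NB_def)
    show "\<forall>x\<in>{..<n}. \<exists>p\<in>{c0}. \<exists>q\<in>NB x. C \<inter> VB x \<subseteq> Y p \<and> C \<inter> VB x \<subseteq> Y q"
      by (auto simp: NB_def c0_def Y_def Ysk_def C_def VB_def)
    show "\<forall>x\<in>{..<n}. \<forall>y\<in>{..<n}. x \<noteq> y \<longrightarrow> VB x \<inter> VB y \<subseteq> C"
      by (auto simp: VB_def C_def)
  qed simp
  then obtain T2 where T2: "tree_decomposition (C \<union> (\<Union>x\<in>{..<n}. VB x)) ({{S,T}} \<union> (\<Union>x\<in>{..<n}. EB x)) ({c0} \<union> (\<Union>x\<in>{..<n}. NB x)) T2 Y" by blast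
  define V2 where "V2 = C \<union> (\<Union>x\<in>{..<n}. VB x)"
  define E2 where "E2 = {{S,T}} \<union> (\<Union>x\<in>{..<n}. EB x)"
  define N2 where "N2 = {c0} \<union> (\<Union>x\<in>{..<n}. NB x)"
  have V2: "V2 = {S,T} \<union> L ` {..<n} \<union> R ` {..<n}" unfolding V2_def C_def VB_def by auto
  have t2: "tree_decomposition V2 E2 N2 T2 Y" using T2 unfolding V2_def E2_def N2_def .
  define I where "I = {..<n} \<times> {..<n}"
  have finI: "finite I" by (simp add: I_def)
  define VL where "VL x = (case x of (j,k) \<Rightarrow> {S, L j} \<union> nodeL n j k ` {..n})" for x
  define EL where "EL x = (case x of (j,k) \<Rightarrow> {{nodeL n j k m, nodeL n j k (Suc m)} | m. m < n})" for x
  define NL :: "nat \<times> nat \<Rightarrow> nd set" where "NL x = (case x of (j,k) \<Rightarrow> (\<lambda>m. ([], (2,j,k,m))) ` {..<n})" for x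
  have s3: "\<exists>TT. tree_decomposition (V2 \<union> (\<Union>x\<in>I. VL x)) (E2 \<union> (\<Union>x\<in>I. EL x)) (N2 \<union> (\<Union>x\<in>I. NL x)) TT Y"
  proof (rule glue_many[OF finI t2])
    show "\<forall>x\<in>I. \<exists>TT. tree_decomposition (VL x) (EL x) (NL x) TT Y"
    proof
      fix x assume "x \<in> I"
      obtain j k where x: "x = (j,k)" by (cases x)
      have "\<exists>TE. tree_decomposition ({S, L j} \<union> nodeL n j k ` {..n}) {{nodeL n j k m, nodeL n j k (Suc m)} | m. m < n}
               ((\<lambda>m. ([], (2,j,k,m)) :: nd) ` {..<n}) TE Y"
        by (rule chain[where f="nodeL n j k" and g="\<lambda>m. ([], (2,j,k,m))" and K="{S, L j}" and Y=Y and M=n, OF _ freshL _ n1])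
           (auto simp: inj_def Y_def Ysk_def)
      then show "\<exists>TT. tree_decomposition (VL x) (EL x) (NL x) TT Y" unfolding VL_def EL_def NL_def x by simp
    qed
    show "\<forall>x\<in>I. NL x \<inter> N2 = {}" by (auto simp: NL_def N2_def NB_def c0_def)
    show "\<forall>x\<in>I. \<forall>y\<in>I. x \<noteq> y \<longrightarrow> NL x \<inter> NL y = {}" by (auto simp: NL_def)
    show "\<forall>x\<in>I. \<exists>p\<in>N2. \<exists>q\<in>NL x. V2 \<inter> VL x \<subseteq> Y p \<and> V2 \<inter> VL x \<subseteq> Y q"
    proof
      fix x assume "x \<in> I"
      obtain j k where x: "x = (j,k)" and jk: "j < n" "k < n" using \<open>x \<in> I\<close> by (auto simp: I_def)
      have sub: "V2 \<inter> VL x \<subseteq> {S, L j}"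
      proof
        fix z assume z: "z \<in> V2 \<inter> VL x"
        then obtain m where "z = S \<or> z = L j \<or> z = nodeL n j k m" unfolding VL_def x by auto
        then have "z = S \<or> z = L j \<or> z = PL j k m" using nodeL_cases by metis
        then show "z \<in> {S, L j}" using z V2 by auto
      qed
      have i1: "c0 \<in> N2" by (simp add: N2_def)
      have i2: "([], (2,j,k,0)) \<in> NL x" using n1 by (simp add: NL_def x)
      have "{S, L j} \<subseteq> Y c0" using jk by (simp add: Y_def Ysk_def c0_def)
      then have i3: "V2 \<inter> VL x \<subseteq> Y c0" using sub by (rule subset_trans[rotated])
      have "{S, L j} \<subseteq> Y ([], (2,j,k,0))" by (simp add: Y_def Ysk_def)
      then have i4: "V2 \<inter> VL x \<subseteq> Y ([], (2,j,k,0))" using sub by (rule subset_trans[rotated])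
      show "\<exists>p\<in>N2. \<exists>q\<in>NL x. V2 \<inter> VL x \<subseteq> Y p \<and> V2 \<inter> VL x \<subseteq> Y q"
        using i1 i2 i3 i4 by blast
    qed
    show "\<forall>x\<in>I. \<forall>y\<in>I. x \<noteq> y \<longrightarrow> VL x \<inter> VL y \<subseteq> V2"
    proof (intro ballI impI subsetI)
      fix x y z assume xy: "x \<in> I" "y \<in> I" "x \<noteq> y" and z: "z \<in> VL x \<inter> VL y"
      obtain j k where x: "x = (j,k)" and jk: "j < n" "k < n" using xy by (auto simp: I_def)
      obtain j' k' where y: "y = (j',k')" using xy by (cases y) auto
      obtain m where m: "z = S \<or> z = L j \<or> z = nodeL n j k m" using z unfolding VL_def x by auto
      obtain m' where m': "z = S \<or> z = L j' \<or> z = nodeL n j' k' m'" using z unfolding VL_def y by auto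
      have a: "z = S \<or> z = L j \<or> z = PL j k m" using m nodeL_cases by metis
      have b: "z = S \<or> z = L j' \<or> z = PL j' k' m'" using m' nodeL_cases by metis
      from a b have "z = S \<or> z = L j" using xy x y by auto
      then show "z \<in> V2" using V2 jk by auto
    qed
  qed
  then obtain T3 where T3: "tree_decomposition (V2 \<union> (\<Union>x\<in>I. VL x)) (E2 \<union> (\<Union>x\<in>I. EL x)) (N2 \<union> (\<Union>x\<in>I. NL x)) T3 Y" by blast
  define V3 where "V3 = V2 \<union> (\<Union>x\<in>I. VL x)"
  define E3 where "E3 = E2 \<union> (\<Union>x\<in>I. EL x)"
  define N3 where "N3 = N2 \<union> (\<Union>x\<in>I. NL x)"
  have t3: "tree_decomposition V3 E3 N3 T3 Y" using T3 unfolding V3_def E3_def N3_def .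
  have V3: "\<And>z. z \<in> V3 \<Longrightarrow> z = S \<or> z = T \<or> (\<exists>j. z = L j) \<or> (\<exists>k. z = R k) \<or> (\<exists>j k m. z = PL j k m)"
  proof -
    fix z assume "z \<in> V3"
    then consider "z \<in> V2" | x where "x \<in> I" "z \<in> VL x" unfolding V3_def by blast
    then show "z = S \<or> z = T \<or> (\<exists>j. z = L j) \<or> (\<exists>k. z = R k) \<or> (\<exists>j k m. z = PL j k m)"
    proof cases
      case 1 then show ?thesis using V2 by auto
    next
      case 2
      obtain j k where x: "x = (j,k)" by (cases x)
      obtain m where "z = S \<or> z = L j \<or> z = nodeL n j k m" using 2 unfolding VL_def x by auto
      then show ?thesis using nodeL_cases by metis
    qed
  qed
  define VR where "VR x = (case x of (j,k) \<Rightarrow> {R j, T} \<union> nodeR n j k ` {..n})" for x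
  define ER where "ER x = (case x of (j,k) \<Rightarrow> {{nodeR n j k m, nodeR n j k (Suc m)} | m. m < n})" for x
  define NR :: "nat \<times> nat \<Rightarrow> nd set" where "NR x = (case x of (j,k) \<Rightarrow> (\<lambda>m. ([], (3,j,k,m))) ` {..<n})" for x
  have s4: "\<exists>TT. tree_decomposition (V3 \<union> (\<Union>x\<in>I. VR x)) (E3 \<union> (\<Union>x\<in>I. ER x)) (N3 \<union> (\<Union>x\<in>I. NR x)) TT Y"
  proof (rule glue_many[OF finI t3])
    show "\<forall>x\<in>I. \<exists>TT. tree_decomposition (VR x) (ER x) (NR x) TT Y"
    proof
      fix x assume "x \<in> I"
      obtain j k where x: "x = (j,k)" by (cases x)
      have "\<exists>TE. tree_decomposition ({R j, T} \<union> nodeR n j k ` {..n}) {{nodeR n j k m, nodeR n j k (Suc m)} | m. m < n}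
               ((\<lambda>m. ([], (3,j,k,m)) :: nd) ` {..<n}) TE Y"
        by (rule chain[where f="nodeR n j k" and g="\<lambda>m. ([], (3,j,k,m))" and K="{R j, T}" and Y=Y and M=n, OF _ freshR _ n1])
           (auto simp: inj_def Y_def Ysk_def)
      then show "\<exists>TT. tree_decomposition (VR x) (ER x) (NR x) TT Y" unfolding VR_def ER_def NR_def x by simp
    qed
    show "\<forall>x\<in>I. NR x \<inter> N3 = {}" by (auto simp: NR_def N3_def N2_def NB_def NL_def c0_def)
    show "\<forall>x\<in>I. \<forall>y\<in>I. x \<noteq> y \<longrightarrow> NR x \<inter> NR y = {}" by (auto simp: NR_def)
    show "\<forall>x\<in>I. \<exists>p\<in>N3. \<exists>q\<in>NR x. V3 \<inter> VR x \<subseteq> Y p \<and> V3 \<inter> VR x \<subseteq> Y q"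
    proof
      fix x assume "x \<in> I"
      obtain j k where x: "x = (j,k)" and jk: "j < n" "k < n" using \<open>x \<in> I\<close> by (auto simp: I_def)
      have sub: "V3 \<inter> VR x \<subseteq> {R j, T}"
      proof
        fix z assume z: "z \<in> V3 \<inter> VR x"
        then obtain m where "z = R j \<or> z = T \<or> z = nodeR n j k m" unfolding VR_def x by auto
        then have "z = R j \<or> z = T \<or> z = PR j k m" using nodeR_cases by metis
        then show "z \<in> {R j, T}" using z V3 by fastforce
      qed
      have i1: "([], (1,j,0,0)) \<in> N3" using jk by (simp add: N3_def N2_def NB_def)
      have i2: "([], (3,j,k,0)) \<in> NR x" using n1 by (simp add: NR_def x)
      have "{R j, T} \<subseteq> Y ([], (1,j,0,0))" by (simp add: Y_def Ysk_def)
      then have i3: "V3 \<inter> VR x \<subseteq> Y ([], (1,j,0,0))" using sub by (rule subset_trans[rotated])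
      have "{R j, T} \<subseteq> Y ([], (3,j,k,0))" by (simp add: Y_def Ysk_def)
      then have i4: "V3 \<inter> VR x \<subseteq> Y ([], (3,j,k,0))" using sub by (rule subset_trans[rotated])
      show "\<exists>p\<in>N3. \<exists>q\<in>NR x. V3 \<inter> VR x \<subseteq> Y p \<and> V3 \<inter> VR x \<subseteq> Y q"
        using i1 i2 i3 i4 by blast
    qed
    show "\<forall>x\<in>I. \<forall>y\<in>I. x \<noteq> y \<longrightarrow> VR x \<inter> VR y \<subseteq> V3"
    proof (intro ballI impI subsetI)
      fix x y z assume xy: "x \<in> I" "y \<in> I" "x \<noteq> y" and z: "z \<in> VR x \<inter> VR y"
      obtain j k where x: "x = (j,k)" and jk: "j < n" "k < n" using xy by (auto simp: I_def)
      obtain j' k' where y: "y = (j',k')" using xy by (cases y) auto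
      obtain m where m: "z = R j \<or> z = T \<or> z = nodeR n j k m" using z unfolding VR_def x by auto
      obtain m' where m': "z = R j' \<or> z = T \<or> z = nodeR n j' k' m'" using z unfolding VR_def y by auto
      have a: "z = R j \<or> z = T \<or> z = PR j k m" using m nodeR_cases by metis
      have b: "z = R j' \<or> z = T \<or> z = PR j' k' m'" using m' nodeR_cases by metis
      from a b have "z = R j \<or> z = T" using xy x y by auto
      then have "z \<in> V2" using V2 jk by auto
      then show "z \<in> V3" by (simp add: V3_def)
    qed
  qed
  then obtain T4 where T4: "tree_decomposition (V3 \<union> (\<Union>x\<in>I. VR x)) (E3 \<union> (\<Union>x\<in>I. ER x)) (N3 \<union> (\<Union>x\<in>I. NR x)) T4 Y" by blast
  define V4 where "V4 = V3 \<union> (\<Union>x\<in>I. VR x)"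
  define E4 where "E4 = E3 \<union> (\<Union>x\<in>I. ER x)"
  define N4 where "N4 = N3 \<union> (\<Union>x\<in>I. NR x)"
  have t4: "tree_decomposition V4 E4 N4 T4 Y" using T4 unfolding V4_def E4_def N4_def .
  have V4eq: "V4 = V1 n"
  proof
    show "V4 \<subseteq> V1 n"
    proof
      fix z assume "z \<in> V4"
      then consider "z \<in> V2" | x where "x \<in> I" "z \<in> VL x" | x where "x \<in> I" "z \<in> VR x"
        unfolding V4_def V3_def by blast
      then show "z \<in> V1 n"
      proof cases
        case 1 then show ?thesis using V2 by (auto simp: V1_def)
      next
        case 2
        obtain j k where x: "x = (j,k)" and jk: "j < n" "k < n" using 2 by (auto simp: I_def)
        obtain m where "m \<le> n" "z = S \<or> z = L j \<or> z = nodeL n j k m" using 2 unfolding VL_def x by auto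
        then show ?thesis using jk by (auto simp: V1_def nodeL_def split: if_splits)
      next
        case 3
        obtain j k where x: "x = (j,k)" and jk: "j < n" "k < n" using 3 by (auto simp: I_def)
        obtain m where "m \<le> n" "z = R j \<or> z = T \<or> z = nodeR n j k m" using 3 unfolding VR_def x by auto
        then show ?thesis using jk by (auto simp: V1_def nodeR_def split: if_splits)
      qed
    qed
    show "V1 n \<subseteq> V4"
    proof
      fix z assume z: "z \<in> V1 n"
      have "V2 \<subseteq> V4" unfolding V4_def V3_def by blast
      then have A: "z \<in> V2 \<Longrightarrow> z \<in> V4" by blast
      have B: "\<And>j k m. j < n \<Longrightarrow> k < n \<Longrightarrow> 0 < m \<Longrightarrow> m < n \<Longrightarrow> PL j k m \<in> V4"
      proof -
        fix j k m assume h: "j < n" "k < n" "0 < m" "m < n"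
        have "PL j k m = nodeL n j k m" using h by (simp add: nodeL_def)
        then have "PL j k m \<in> VL (j,k)" using h by (auto simp: VL_def)
        moreover have "(j,k) \<in> I" using h by (simp add: I_def)
        ultimately show "PL j k m \<in> V4" unfolding V4_def V3_def by blast
      qed
      have C: "\<And>j k m. j < n \<Longrightarrow> k < n \<Longrightarrow> 0 < m \<Longrightarrow> m < n \<Longrightarrow> PR j k m \<in> V4"
      proof -
        fix j k m assume h: "j < n" "k < n" "0 < m" "m < n"
        have "PR j k m = nodeR n j k m" using h by (simp add: nodeR_def)
        then have "PR j k m \<in> VR (j,k)" using h by (auto simp: VR_def)
        moreover have "(j,k) \<in> I" using h by (simp add: I_def)
        ultimately show "PR j k m \<in> V4" unfolding V4_def by blast
      qed
      show "z \<in> V4" using z A B C V2 unfolding V1_def by blast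
    qed
  qed
  have Eq: "Esk n \<subseteq> E4"
  proof
    fix e assume "e \<in> Esk n"
    then consider (st) "e = {S,T}" | (ab) a b where "e = {a,b}" "(a,b) \<in> D1 n" unfolding Esk_def by blast
    then show "e \<in> E4"
    proof cases
      case st then show ?thesis by (simp add: E4_def E3_def E2_def)
    next
      case ab
      from ab(2) consider (lr) j k where "a = L j" "b = R k" "j < n" "k < n"
        | (cl) j k m where "a = nodeL n j k m" "b = nodeL n j k (Suc m)" "j < n" "k < n" "m < n"
        | (cr) j k m where "a = nodeR n j k m" "b = nodeR n j k (Suc m)" "j < n" "k < n" "m < n"
        unfolding D1_def by blast
      then show ?thesis
      proof cases
        case lr
        then have "e \<in> EB k" using ab by (auto simp: EB_def)
        then show ?thesis using lr unfolding E4_def E3_def E2_def by blast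
      next
        case cl
        then have "e \<in> EL (j,k)" using ab by (auto simp: EL_def)
        moreover have "(j,k) \<in> I" using cl by (simp add: I_def)
        ultimately show ?thesis unfolding E4_def E3_def by blast
      next
        case cr
        then have "e \<in> ER (j,k)" using ab by (auto simp: ER_def)
        moreover have "(j,k) \<in> I" using cr by (simp add: I_def)
        ultimately show ?thesis unfolding E4_def by blast
      qed
    qed
  qed
  have Nok: "\<forall>x\<in>N4. fst x = [] \<and> finite (Ysk n x) \<and> card (Ysk n x) \<le> n + 2"
  proof
    fix x assume "x \<in> N4"
    then consider "x = c0" | k where "k < n" "x = ([], (1,k,0,0))"
      | j k m where "j < n" "k < n" "m < n" "x = ([], (2,j,k,m))"
      | j k m where "j < n" "k < n" "m < n" "x = ([], (3,j,k,m))"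
      unfolding N4_def N3_def N2_def NB_def NL_def NR_def I_def by auto
    then show "fst x = [] \<and> finite (Ysk n x) \<and> card (Ysk n x) \<le> n + 2"
    proof cases
      case 1 then show ?thesis using card_C[of S T n] by (simp add: c0_def Ysk_def)
    next
      case 2 then show ?thesis using card_C[of T "R k" n] by (simp add: Ysk_def)
    next
      case 3 then show ?thesis using card_chainL[OF n1, of m j k] by (simp add: Ysk_def)
    next
      case 4 then show ?thesis using card_chainR[OF n1, of m j k] by (simp add: Ysk_def)
    qed
  qed
  show ?thesis using td_mono[OF t4 Eq] Nok unfolding V4eq Y_def by blast
qed




lemma emb_inj: "a \<noteq> b \<Longrightarrow> inj (emb a b)"
  unfolding inj_def emb_def by (auto simp: prod_eq_iff)

lemma emb_nil: "z \<in> emb a b ` A \<Longrightarrow> fst z = [] \<Longrightarrow> z = ([],a) \<or> z = ([],b)"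
  unfolding emb_def by (auto split: if_splits)

lemma emb_cons: "z \<in> emb a b ` A \<Longrightarrow> fst z \<noteq> [] \<Longrightarrow> hd (fst z) = (a,b)"
  unfolding emb_def by (auto split: if_splits)

lemma D1_neq: "(a,b) \<in> D1 n \<Longrightarrow> a \<noteq> b"
  unfolding D1_def by (auto simp: nodeL_def nodeR_def split: if_splits)

lemma nodeL_V1: "j < n \<Longrightarrow> k < n \<Longrightarrow> m \<le> n \<Longrightarrow> nodeL n j k m \<in> V1 n"
  by (auto simp: nodeL_def V1_def)
lemma nodeR_V1: "j < n \<Longrightarrow> k < n \<Longrightarrow> m \<le> n \<Longrightarrow> nodeR n j k m \<in> V1 n"
  by (auto simp: nodeR_def V1_def)

lemma L_V1: "j < n \<Longrightarrow> L j \<in> V1 n" by (simp add: V1_def)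
lemma R_V1: "j < n \<Longrightarrow> R j \<in> V1 n" by (simp add: V1_def)

lemma D1_V1: "(a,b) \<in> D1 n \<Longrightarrow> a \<in> V1 n \<and> b \<in> V1 n"
  unfolding D1_def by (auto intro!: nodeL_V1 nodeR_V1 L_V1 R_V1)

lemma finite_V1: "finite (V1 n)"
proof -
  have "V1 n \<subseteq> {S,T} \<union> L ` {..<n} \<union> R ` {..<n} \<union> (\<lambda>(j,k,m). PL j k m) ` ({..<n} \<times> {..<n} \<times> {..<n})
     \<union> (\<lambda>(j,k,m). PR j k m) ` ({..<n} \<times> {..<n} \<times> {..<n})"
    unfolding V1_def by force
  moreover have "finite ({S,T} \<union> L ` {..<n} \<union> R ` {..<n} \<union> (\<lambda>(j,k,m). PL j k m) ` ({..<n} \<times> {..<n} \<times> {..<n})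
     \<union> (\<lambda>(j,k,m). PR j k m) ` ({..<n} \<times> {..<n} \<times> {..<n}))" by simp
  ultimately show ?thesis by (rule finite_subset)
qed

lemma finite_D1: "finite (D1 n)"
proof -
  have "D1 n \<subseteq> V1 n \<times> V1 n" using D1_V1 by auto
  then show ?thesis using finite_V1 by (meson finite_SigmaI finite_subset)
qed

lemma level:
  assumes n1: "n \<ge> 1"
  shows "\<exists>(N::nd set) TE X. tree_decomposition (Hv n i) (He n i \<union> {{([],S),([],T)}}) N TE X \<and>
           (\<forall>x\<in>N. finite (X x) \<and> card (X x) \<le> n + 2)"
proof (induction i)
  case 0
  have "tree_decomposition (Hv n 0) (He n 0 \<union> {{([],S),([],T)}}) {([], (0,0,0,0))} {} (\<lambda>_. Hv n 0)"
    by (rule td_single) auto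
  moreover have "card (Hv n 0) \<le> n + 2" by simp
  ultimately show ?case by fastforce
next
  case (Suc i)
  then obtain N :: "nd set" and TE X where td: "tree_decomposition (Hv n i) (He n i \<union> {{([],S),([],T)}}) N TE X"
    and cX: "\<forall>x\<in>N. finite (X x) \<and> card (X x) \<le> n + 2" by blast
  obtain Nsk Tsk where sk: "tree_decomposition (V1 n) (Esk n) Nsk Tsk (Ysk n)"
    and skN: "\<forall>x\<in>Nsk. fst x = [] \<and> finite (Ysk n x) \<and> card (Ysk n x) \<le> n + 2"
    using skeleton[OF n1] by blast
  define Yi :: "nd \<Rightarrow> hvert set" where
    "Yi x = (if fst x = [] then (\<lambda>v. ([],v)) ` Ysk n x else (case hd (fst x) of (a,b) \<Rightarrow> emb a b ` X (tl (fst x), snd x)))" for x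
  define V :: "hvert set" where "V = (\<lambda>v. ([],v)) ` V1 n"
  define E :: "hvert set set" where "E = (`) (\<lambda>v. ([],v)) ` Esk n"
  define VV where "VV = (\<lambda>(a,b). emb a b ` Hv n i)"
  define EE where "EE = (\<lambda>(a,b). (`) (emb a b) ` (He n i \<union> {{([],S),([],T)}}))"
  define gg where "gg = (\<lambda>(a,b) (z::nd). (((a,b) # fst z, snd z) :: nd))"
  define NN where "NN = (\<lambda>x. gg x ` N)"
  have inj0: "inj_on (\<lambda>v::v1. (([]::(v1\<times>v1) list),v)) (V1 n)" by (auto simp: inj_on_def)
  have base: "tree_decomposition V E Nsk Tsk Yi"
    unfolding V_def E_def by (rule td_vmap[OF inj0 sk]) (use skN in \<open>simp add: Yi_def\<close>)
  have pieces: "\<forall>x\<in>D1 n. \<exists>TT. tree_decomposition (VV x) (EE x) (NN x) TT Yi"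
  proof
    fix x assume x: "x \<in> D1 n"
    obtain a b where ab: "x = (a,b)" by (cases x)
    have neq: "a \<noteq> b" using D1_neq x ab by blast
    have t1: "tree_decomposition (emb a b ` Hv n i) ((`) (emb a b) ` (He n i \<union> {{([],S),([],T)}})) N TE (\<lambda>z. emb a b ` X z)"
      by (rule td_vmap[OF _ td]) (use emb_inj[OF neq] in \<open>auto intro: inj_on_subset\<close>)
    have injg: "inj_on (gg x) N" unfolding gg_def ab by (auto simp: inj_on_def prod_eq_iff)
    have t2: "tree_decomposition (emb a b ` Hv n i) ((`) (emb a b) ` (He n i \<union> {{([],S),([],T)}})) (gg x ` N) ((`) (gg x) ` TE) Yi"
      by (rule td_nmap[OF injg t1]) (simp add: Yi_def gg_def ab)
    then show "\<exists>TT. tree_decomposition (VV x) (EE x) (NN x) TT Yi" unfolding VV_def EE_def NN_def ab by auto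
  qed
  have dj1: "\<forall>x\<in>D1 n. NN x \<inter> Nsk = {}" using skN by (auto simp: NN_def gg_def)
  have dj2: "\<forall>x\<in>D1 n. \<forall>y\<in>D1 n. x \<noteq> y \<longrightarrow> NN x \<inter> NN y = {}" by (auto simp: NN_def gg_def)
  have att: "\<forall>x\<in>D1 n. \<exists>p\<in>Nsk. \<exists>q\<in>NN x. V \<inter> VV x \<subseteq> Yi p \<and> V \<inter> VV x \<subseteq> Yi q"
  proof
    fix x assume x: "x \<in> D1 n"
    obtain a b where ab: "x = (a,b)" by (cases x)
    have sub: "V \<inter> VV x \<subseteq> {([],a),([],b)}"
    proof
      fix z assume "z \<in> V \<inter> VV x"
      then have "z \<in> V" "z \<in> VV x" by auto+
      then have "fst z = []" "z \<in> emb a b ` Hv n i" unfolding V_def VV_def ab by auto+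
      then show "z \<in> {([],a),([],b)}" using emb_nil by blast
    qed
    have ab_in: "{a,b} \<in> Esk n" using x ab unfolding Esk_def by blast
    have covsk: "\<forall>e\<in>Esk n. \<exists>i\<in>Nsk. e \<subseteq> Ysk n i" using sk by (simp add: tree_decomposition_def)
    obtain p where p: "p \<in> Nsk" "{a,b} \<subseteq> Ysk n p" using bspec[OF covsk ab_in] by blast
    have "{([],a),([],b)} \<subseteq> Yi p" using p skN by (auto simp: Yi_def)
    then have P: "V \<inter> VV x \<subseteq> Yi p" using sub by (rule subset_trans[rotated])
    have covi: "\<forall>e\<in>He n i \<union> {{([],S),([],T)}}. \<exists>i\<in>N. e \<subseteq> X i" using td by (simp add: tree_decomposition_def)
    obtain r where r: "r \<in> N" "{([],S),([],T)} \<subseteq> X r" using bspec[OF covi, of "{([],S),([],T)}"] by blast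
    have "{([],a),([],b)} \<subseteq> emb a b ` X r" using r(2) by (force simp: emb_def)
    moreover have "Yi (gg x r) = emb a b ` X r" by (simp add: Yi_def gg_def ab)
    ultimately have Q: "V \<inter> VV x \<subseteq> Yi (gg x r)" using sub by auto
    have "gg x r \<in> NN x" using r by (simp add: NN_def)
    then show "\<exists>p\<in>Nsk. \<exists>q\<in>NN x. V \<inter> VV x \<subseteq> Yi p \<and> V \<inter> VV x \<subseteq> Yi q" using P Q p(1) by blast
  qed
  have vint: "\<forall>x\<in>D1 n. \<forall>y\<in>D1 n. x \<noteq> y \<longrightarrow> VV x \<inter> VV y \<subseteq> V"
  proof (intro ballI impI subsetI)
    fix x y z assume xy: "x \<in> D1 n" "y \<in> D1 n" "x \<noteq> y" and z: "z \<in> VV x \<inter> VV y"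
    obtain a b where ab: "x = (a,b)" by (cases x)
    obtain c d where cd: "y = (c,d)" by (cases y)
    have zx: "z \<in> emb a b ` Hv n i" and zy: "z \<in> emb c d ` Hv n i" using z unfolding VV_def ab cd by auto
    show "z \<in> V"
    proof (cases "fst z = []")
      case True
      then have "z = ([],a) \<or> z = ([],b)" using emb_nil zx by blast
      moreover have "a \<in> V1 n" "b \<in> V1 n" using D1_V1 xy(1) ab by auto
      ultimately show ?thesis unfolding V_def by auto
    next
      case False
      then have "hd (fst z) = (a,b)" "hd (fst z) = (c,d)" using emb_cons zx zy by blast+
      then show ?thesis using xy ab cd by simp
    qed
  qed
  obtain TT where g: "tree_decomposition (V \<union> (\<Union>x\<in>D1 n. VV x)) (E \<union> (\<Union>x\<in>D1 n. EE x)) (Nsk \<union> (\<Union>x\<in>D1 n. NN x)) TT Yi"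
    using glue_many[OF finite_D1 base pieces dj1 dj2 att vint] by blast
  have Veq: "V \<union> (\<Union>x\<in>D1 n. VV x) = Hv n (Suc i)" by (simp add: V_def VV_def)
  have Esub: "He n (Suc i) \<union> {{([],S),([],T)}} \<subseteq> E \<union> (\<Union>x\<in>D1 n. EE x)"
  proof
    fix e assume "e \<in> He n (Suc i) \<union> {{([],S),([],T)}}"
    then consider "e = {([],S),([],T)}" | a b e0 where "(a,b) \<in> D1 n" "e0 \<in> He n i" "e = emb a b ` e0" by auto
    then show "e \<in> E \<union> (\<Union>x\<in>D1 n. EE x)"
    proof cases
      case 1
      have "{S,T} \<in> Esk n" by (simp add: Esk_def)
      moreover have "e = (\<lambda>v. ([],v)) ` {S,T}" using 1 by simp
      ultimately show ?thesis unfolding E_def by blast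
    next
      case 2
      then have "e \<in> EE (a,b)" unfolding EE_def by auto
      then show ?thesis using 2 by blast
    qed
  qed
  have cards: "\<forall>x\<in>Nsk \<union> (\<Union>x\<in>D1 n. NN x). finite (Yi x) \<and> card (Yi x) \<le> n + 2"
  proof
    fix x assume "x \<in> Nsk \<union> (\<Union>x\<in>D1 n. NN x)"
    then consider "x \<in> Nsk" | a b z where "(a,b) \<in> D1 n" "z \<in> N" "x = gg (a,b) z" unfolding NN_def by auto
    then show "finite (Yi x) \<and> card (Yi x) \<le> n + 2"
    proof cases
      case 1
      then have "Yi x = (\<lambda>v. ([],v)) ` Ysk n x" "finite (Ysk n x)" "card (Ysk n x) \<le> n + 2" using skN by (auto simp: Yi_def)
      then have c1: "card (Yi x) \<le> card (Ysk n x)" and f: "finite (Yi x)" using card_image_le by auto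
      show ?thesis using f order_trans[OF c1] \<open>card (Ysk n x) \<le> n + 2\<close> by simp
    next
      case 2
      then have "Yi x = emb a b ` X z" by (simp add: Yi_def gg_def)
      moreover have "finite (X z)" "card (X z) \<le> n + 2" using cX 2 by auto
      ultimately have c1: "card (Yi x) \<le> card (X z)" and f: "finite (Yi x)" using card_image_le by auto
      show ?thesis using f order_trans[OF c1] \<open>card (X z) \<le> n + 2\<close> by simp
    qed
  qed
  show ?case using td_mono[OF g Esub] cards unfolding Veq by blast
qed




theorem lemma2:
  fixes n i :: nat
  assumes "n \<ge> 1" and "i \<ge> 1"
  shows "treewidth (Hv n i) (He n i) \<le> n + 1"
proof -
  obtain N :: "nd set" and TE X where td: "tree_decomposition (Hv n i) (He n i \<union> {{([],S),([],T)}}) N TE X"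
    and cX: "\<forall>x\<in>N. finite (X x) \<and> card (X x) \<le> n + 2" using level[OF assms(1)] by blast
  have "finite N" using td by (simp add: tree_decomposition_def is_tree_def)
  then obtain f :: "nd \<Rightarrow> nat" where inj: "inj_on f N" using finite_imp_inj_to_nat_seg by blast
  define Y where "Y j = X (inv_into N f j)" for j
  have "tree_decomposition (Hv n i) (He n i \<union> {{([],S),([],T)}}) (f ` N) ((`) f ` TE) Y"
    by (rule td_nmap[OF inj td]) (simp add: Y_def inj)
  then have td2: "tree_decomposition (Hv n i) (He n i) (f ` N) ((`) f ` TE) Y" by (rule td_mono) blast
  have c2: "\<forall>j\<in>f ` N. card (Y j) \<le> (n + 1) + 1" using cX inj by (auto simp: Y_def)
  have "\<exists>(N :: nat set) TE X. tree_decomposition (Hv n i) (He n i) N TE X \<and> (\<forall>i\<in>N. card (X i) \<le> (n + 1) + 1)"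
    using td2 c2 by blast
  then show ?thesis unfolding treewidth_def by (rule Least_le)
qed


end
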